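(* Let $m_1,m_2\in\mathbb{N}$ be relatively prime, let $\alpha\in\mathbb{R}$, and let $\boldsymbol{\varrho}=\boldsymbol{\varrho}^{(\boldsymbol{m})}_\alpha$ be the rhodonea curve defined below. For $t\in[0,2\pi)$ put $\mathcal{S}(t)=\{s\in[0,2\pi):\ \boldsymbol{\varrho}(s)=\boldsymbol{\varrho}(t)\}$, and let $t_l=\frac{l\pi}{2m_1m_2}$ for $l\in\{0,1,\dots,4m_1m_2-1\}$. If $m_1+m_2$ is odd, then the minimal period of $\boldsymbol{\varrho}$ is $2\pi$ and: (i) $\#\mathcal{S}(t)=2m_2$ if $t=t_l$ for some $l\in\{0,\dots,4m_1m_2-1\}$ with $l\equiv m_1 \pmod{2m_1}$; (ii) $\#\mathcal{S}(t)=2$ if $t=t_l$ for some $l\in\{0,\dots,4m_1m_2-1\}$ with $l\not\equiv 0\pmod{m_1}$; (iii) $\#\mathcal{S}(t)=1$ for all other $t\in[0,2\pi)$. If $m_1+m_2$ is even, then the minimal period of $\boldsymbol{\varrho}$ is $\pi$ and: (i)' $\#\mathcal{S}(t)=2m_2$ if $t=t_l$ for some $l\in\{0,\dots,4m_1m_2-1\}$ with $l\equiv m_1\pmod{2m_1}$; (ii)' $\#\mathcal{S}(t)=4$ if $t=t_{2l}$ for some $l\in\{0,\dots,2m_1m_2-1\}$ with $l\not\equiv 0\pmod{m_1}$; (iii)' $\#\mathcal{S}(t)=2$ for all other $t\in[0,2\pi)$.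
   Context: For $\boldsymbol{m}=(m_1,m_2)\in\mathbb{N}^2$ and $\alpha\in\mathbb{R}$, the rhodonea curve is $\boldsymbol{\varrho}^{(\boldsymbol{m})}_\alpha:\mathbb{R}\to\mathbb{R}^2$, $\boldsymbol{\varrho}^{(\boldsymbol{m})}_\alpha(t)=\big(\cos(m_2t)\cos(m_1t-\alpha\pi),\ \cos(m_2t)\sin(m_1t-\alpha\pi)\big)$. It takes values in the closed unit disk $\mathbb{D}=\{x\in\mathbb{R}^2:|x|\le1\}$. *)

theory Defs
  imports "HOL-Analysis.Analysis"
begin

definition rhodonea :: "nat \<Rightarrow> nat \<Rightarrow> real \<Rightarrow> real \<Rightarrow> real \<times> real" where
  "rhodonea m1 m2 \<alpha> t =
     (cos (real m2 * t) * cos (real m1 * t - \<alpha> * pi),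
      cos (real m2 * t) * sin (real m1 * t - \<alpha> * pi))"

definition minimal_period :: "(real \<Rightarrow> 'a) \<Rightarrow> real \<Rightarrow> bool" where
  "minimal_period f p \<longleftrightarrow> p > 0 \<and> (\<forall>t. f (t + p) = f t) \<and>
     (\<forall>q. 0 < q \<and> q < p \<longrightarrow> \<not> (\<forall>t. f (t + q) = f t))"

definition self_inter_set :: "(real \<Rightarrow> 'a) \<Rightarrow> real \<Rightarrow> real set" where
  "self_inter_set f t = {s \<in> {0..<2*pi}. f s = f t}"

definition tnode :: "nat \<Rightarrow> nat \<Rightarrow> nat \<Rightarrow> real" where
  "tnode m1 m2 l = real l * pi / (2 * real m1 * real m2)"

end

theory Submission imports Defs begin

lemma cos_shift_npi: "cos (x + real n * pi) = (-1)^n * cos x"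
  by (simp add: cos_add)
lemma sin_shift_npi: "sin (x + real n * pi) = (-1)^n * sin x"
  by (simp add: sin_add)

lemma cos_minus_n2pi: "cos (y - real n * (2*pi)) = cos y"
proof -
  have "real n * (2*pi) = real (2*n) * pi" by simp
  then show ?thesis by (simp only: cos_diff) simp
qed
lemma sin_minus_n2pi: "sin (y - real n * (2*pi)) = sin y"
proof -
  have "real n * (2*pi) = real (2*n) * pi" by simp
  then show ?thesis by (simp only: sin_diff) simp
qed

lemma rho_minus_2pi: "rhodonea m1 m2 \<alpha> (x - 2*pi) = rhodonea m1 m2 \<alpha> x"
proof -
  have 1: "real m2 * (x - 2*pi) = real m2 * x - real m2 * (2*pi)" by (simp add: algebra_simps)
  have 2: "real m1 * (x - 2*pi) - \<alpha>*pi = (real m1 * x - \<alpha>*pi) - real m1 * (2*pi)" by (simp add: algebra_simps)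
  show ?thesis unfolding rhodonea_def 1 2 cos_minus_n2pi sin_minus_n2pi ..
qed

lemma rho_plus_2pi: "rhodonea m1 m2 \<alpha> (x + 2*pi) = rhodonea m1 m2 \<alpha> x"
  using rho_minus_2pi[of m1 m2 \<alpha> "x + 2*pi"] by simp

lemma rho_shift:
  assumes "m1 \<ge> 1"
    and "cos (real m2 * (t + real k * pi / real m1)) = (-1)^k * cos (real m2 * t)"
  shows "rhodonea m1 m2 \<alpha> (t + real k * pi / real m1) = rhodonea m1 m2 \<alpha> t"
proof -
  have e: "real m1 * (t + real k * pi / real m1) - \<alpha>*pi = (real m1 * t - \<alpha>*pi) + real k * pi"
    using assms(1) by (simp add: field_simps)
  have sq: "((-1::real)^k) * (-1)^k = 1" by (simp add: power_mult_distrib[symmetric] flip: power_add)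
  show ?thesis unfolding rhodonea_def e cos_shift_npi sin_shift_npi assms(2)
    using sq by (simp add: algebra_simps)
qed

lemma rho_eq_nonzero:
  assumes "m1 \<ge> 1" "cos (real m2 * t) \<noteq> 0"
    "rhodonea m1 m2 \<alpha> s = rhodonea m1 m2 \<alpha> t"
  shows "\<exists>k::int. real m1 * (s - t) = real_of_int k * pi \<and>
     cos (real m2 * s) = (if even k then cos (real m2 * t) else - cos (real m2 * t))"
proof -
  define a where "a = cos (real m2 * s)"
  define b where "b = cos (real m2 * t)"
  define \<phi> where "\<phi> = real m1 * s - \<alpha>*pi"
  define \<psi> where "\<psi> = real m1 * t - \<alpha>*pi"
  have c: "a * cos \<phi> = b * cos \<psi>" and s: "a * sin \<phi> = b * sin \<psi>"
    using assms(3) unfolding rhodonea_def a_def b_def \<phi>_def \<psi>_def by auto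
  have "a^2 = a^2 * ((sin \<phi>)^2 + (cos \<phi>)^2)" by simp
  also have "\<dots> = (a * sin \<phi>)^2 + (a * cos \<phi>)^2" by (simp only: power_mult_distrib distrib_left)
  also have "\<dots> = b^2 * ((sin \<psi>)^2 + (cos \<psi>)^2)" unfolding c s by (simp only: power_mult_distrib distrib_left)
  also have "\<dots> = b^2" by simp
  finally have "a^2 = b^2" .
  hence ab: "a = b \<or> a = - b" by (simp add: power2_eq_iff)
  have b0: "b \<noteq> 0" using assms(2) b_def by simp
  have diff: "real m1 * (s - t) = \<phi> - \<psi>" unfolding \<phi>_def \<psi>_def by (simp add: algebra_simps)
  show ?thesis
  proof (cases "a = b")
    case True
    then have "cos \<phi> = cos \<psi>" "sin \<phi> = sin \<psi>" using c s b0 by auto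
    then obtain n :: int where "\<phi> = \<psi> + 2*pi*n" using sin_cos_eq_iff by blast
    then show ?thesis using True diff a_def b_def
      by (intro exI[of _ "2*n"]) (auto simp: algebra_simps)
  next
    case False
    then have aa: "a = -b" using ab by auto
    have "b * (- cos \<phi>) = b * cos \<psi>" "b * (- sin \<phi>) = b * sin \<psi>" using c s aa by auto
    then have "- cos \<phi> = cos \<psi>" "- sin \<phi> = sin \<psi>" using b0 mult_left_cancel by blast+
    then have "cos \<phi> = cos (\<psi> + pi)" "sin \<phi> = sin (\<psi> + pi)" by auto
    then obtain n :: int where "\<phi> = \<psi> + pi + 2*pi*n" using sin_cos_eq_iff by blast
    then show ?thesis using aa diff a_def b_def
      by (intro exI[of _ "2*n+1"]) (auto simp: algebra_simps)
  qed
qed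

definition sk :: "nat \<Rightarrow> real \<Rightarrow> nat \<Rightarrow> real" where
  "sk m1 t k = (if t + real k * pi / real m1 < 2*pi then t + real k * pi / real m1
                else t + real k * pi / real m1 - 2*pi)"

definition Pk :: "nat \<Rightarrow> nat \<Rightarrow> real \<Rightarrow> nat \<Rightarrow> bool" where
  "Pk m1 m2 t k \<longleftrightarrow> cos (real m2 * (t + real k * pi / real m1)) = (-1)^k * cos (real m2 * t)"

lemma sk_inj:
  assumes "m1 \<ge> 1" shows "inj_on (sk m1 t) {..<2*m1}"
proof (rule inj_onI)
  fix a b assume a: "a \<in> {..<2*m1}" and b: "b \<in> {..<2*m1}" and e: "sk m1 t a = sk m1 t b"
  have m: "real m1 > 0" using assms by simp
  have d: "real a * pi / real m1 - real b * pi / real m1 = (real a - real b) * pi / real m1"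
    by (simp add: diff_divide_distrib left_diff_distrib)
  have "\<bar>(real a - real b) * pi / real m1\<bar> < 2*pi"
  proof -
    have "\<bar>real a - real b\<bar> < 2 * real m1" using a b by auto
    hence "\<bar>real a - real b\<bar> * pi < 2 * real m1 * pi" by simp
    hence "\<bar>real a - real b\<bar> * pi / real m1 < 2 * real m1 * pi / real m1"
      using divide_strict_right_mono m by blast
    moreover have "\<bar>(real a - real b) * pi / real m1\<bar> = \<bar>real a - real b\<bar> * pi / real m1"
      using m by (simp add: abs_mult abs_divide)
    ultimately show ?thesis using m by simp
  qed
  moreover have "(real a - real b) * pi / real m1 \<in> {0, 2*pi, -2*pi}"
    using e d unfolding sk_def by (auto split: if_splits simp: algebra_simps)
  moreover have "\<And>x::real. \<bar>x\<bar> < 2*pi \<Longrightarrow> x \<in> {0, 2*pi, -2*pi} \<Longrightarrow> x = 0" by auto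
  ultimately have "(real a - real b) * pi / real m1 = 0" by blast
  thus "a = b" using m by simp
qed

lemma sk_range:
  assumes "m1 \<ge> 1" "0 \<le> t" "t < 2*pi" "k < 2*m1"
  shows "0 \<le> sk m1 t k \<and> sk m1 t k < 2*pi"
proof -
  have m: "real m1 > 0" using assms by simp
  have "real k * pi / real m1 < 2 * pi"
    using assms(4) m by (simp add: field_simps)
  moreover have "real k * pi / real m1 \<ge> 0" by simp
  ultimately show ?thesis using assms unfolding sk_def by auto
qed

lemma rho_sk:
  assumes "m1 \<ge> 1" "Pk m1 m2 t k"
  shows "rhodonea m1 m2 \<alpha> (sk m1 t k) = rhodonea m1 m2 \<alpha> t"
  using rho_shift[OF assms(1), of m2 t k \<alpha>] assms(2) rho_minus_2pi
  unfolding sk_def Pk_def by auto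

lemma cos_plus_n2pi: "cos (y + real n * (2*pi)) = cos y"
  using cos_minus_n2pi[of "y + real n * (2*pi)" n] by simp

lemma self_inter_nonzero:
  assumes "m1 \<ge> 1" "0 \<le> t" "t < 2*pi" "cos (real m2 * t) \<noteq> 0"
  shows "self_inter_set (rhodonea m1 m2 \<alpha>) t = sk m1 t ` {k. k < 2*m1 \<and> Pk m1 m2 t k}"
proof
  show "sk m1 t ` {k. k < 2*m1 \<and> Pk m1 m2 t k} \<subseteq> self_inter_set (rhodonea m1 m2 \<alpha>) t"
    using sk_range[OF assms(1-3)] rho_sk[OF assms(1)] unfolding self_inter_set_def by auto
next
  have m: "real m1 > 0" using assms by simp
  show "self_inter_set (rhodonea m1 m2 \<alpha>) t \<subseteq> sk m1 t ` {k. k < 2*m1 \<and> Pk m1 m2 t k}"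
  proof
    fix s assume "s \<in> self_inter_set (rhodonea m1 m2 \<alpha>) t"
    hence s: "0 \<le> s" "s < 2*pi" "rhodonea m1 m2 \<alpha> s = rhodonea m1 m2 \<alpha> t"
      unfolding self_inter_set_def by auto
    obtain k :: int where k: "real m1 * (s - t) = real_of_int k * pi"
      "cos (real m2 * s) = (if even k then cos (real m2 * t) else - cos (real m2 * t))"
      using rho_eq_nonzero[OF assms(1,4) s(3)] by blast
    define k' where "k' = nat (k mod (2 * int m1))"
    define q where "q = k div (2 * int m1)"
    have kk: "k = int k' + 2 * int m1 * q" unfolding k'_def q_def using assms(1) by simp
    have k'lt: "k' < 2*m1" unfolding k'_def using assms(1)
      by (simp add: nat_less_iff)
    have par: "even k \<longleftrightarrow> even k'" using kk by auto
    define u where "u = t + real k' * pi / real m1"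
    have sd: "s = t + real_of_int k * pi / real m1" using k(1) m by (simp add: field_simps)
    have su: "s = u + real_of_int q * (2*pi)"
      unfolding sd u_def kk using m by (simp add: field_simps)
    have u0: "0 \<le> u" "u < 4 * pi"
    proof -
      have "real k' * pi / real m1 < 2 * pi" using k'lt m by (simp add: field_simps)
      thus "0 \<le> u" "u < 4 * pi" unfolding u_def using assms by auto
    qed
    have "real_of_int q * (2*pi) > - 4 * pi" "real_of_int q * (2*pi) < 2 * pi"
      using su u0 s by linarith+
    hence "real_of_int q * pi > (-2) * pi" "real_of_int q * pi < 1 * pi" by linarith+
    hence "real_of_int q > -2" "real_of_int q < 1" using pi_gt_zero mult_less_cancel_right_pos by blast+
    hence "q = 0 \<or> q = -1" by linarith
    hence q: "s = u \<or> s = u - 2*pi" using su by auto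
    have "cos (real m2 * u) = cos (real m2 * s)"
      using q cos_plus_n2pi[of "real m2 * s" m2] by (auto simp: algebra_simps)
    hence P: "Pk m1 m2 t k'" unfolding Pk_def u_def[symmetric] using k(2) par by auto
    have "s = sk m1 t k'" using q s unfolding sk_def u_def[symmetric] by auto
    thus "s \<in> sk m1 t ` {k. k < 2*m1 \<and> Pk m1 m2 t k}" using P k'lt by auto
  qed
qed

lemma cos_eq_iff_sin: "cos (x::real) = cos y \<longleftrightarrow> sin ((x + y)/2) = 0 \<or> sin ((y - x)/2) = 0"
  using cos_diff_cos[of x y] by auto

lemma Pk_char:
  assumes "m1 \<ge> 1"
  shows "Pk m1 m2 t k \<longleftrightarrow>
    (\<exists>i::int. real k * (real m1 - real m2) = 2 * real_of_int i * real m1) \<or>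
    (\<exists>i::int. 2 * real m1 * real m2 * t + real k * (real m1 + real m2) * pi = 2 * real_of_int i * real m1 * pi)"
proof -
  have m: "real m1 > 0" using assms by simp
  have y: "(-1)^k * cos (real m2 * t) = cos (real m2 * t + real k * pi)"
    using cos_shift_npi by simp
  define x where "x = real m2 * (t + real k * pi / real m1)"
  have e1: "(x + (real m2 * t + real k * pi)) / 2 = (2 * real m1 * real m2 * t + real k * (real m1 + real m2) * pi) / (2 * real m1)"
    unfolding x_def using m by (simp add: field_simps)
  have e2: "((real m2 * t + real k * pi) - x) / 2 = (real k * (real m1 - real m2)) * pi / (2 * real m1)"
    unfolding x_def using m by (simp add: field_simps)
  have A: "\<And>a::real. sin (a / (2 * real m1)) = 0 \<longleftrightarrow> (\<exists>i::int. a = 2 * real_of_int i * real m1 * pi)"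
  proof -
    fix a
    have "sin (a / (2 * real m1)) = 0 \<longleftrightarrow> (\<exists>i::int. a / (2 * real m1) = real_of_int i * pi)"
      by (rule sin_zero_iff_int2)
    also have "\<dots> \<longleftrightarrow> (\<exists>i::int. a = 2 * real_of_int i * real m1 * pi)"
      using m by (simp add: field_simps)
    finally show "sin (a / (2 * real m1)) = 0 \<longleftrightarrow> (\<exists>i::int. a = 2 * real_of_int i * real m1 * pi)" .
  qed
  have B: "\<And>i::int. real k * (real m1 - real m2) * pi = 2 * real_of_int i * real m1 * pi
     \<longleftrightarrow> real k * (real m1 - real m2) = 2 * real_of_int i * real m1"
    by simp
  show ?thesis
    unfolding Pk_def y x_def[symmetric] cos_eq_iff_sin e1 e2 A B by blast
qed

lemma D1_iff:
  "(\<exists>i::int. real k * (real m1 - real m2) = 2 * real_of_int i * real m1) \<longleftrightarrow>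
   (2 * int m1) dvd (int k * (int m1 - int m2))"
proof -
  have "\<And>i. (real k * (real m1 - real m2) = 2 * real_of_int i * real m1) \<longleftrightarrow>
     (int k * (int m1 - int m2) = 2 * int m1 * i)"
  proof -
    fix i :: int
    have "real k * (real m1 - real m2) = real_of_int (int k * (int m1 - int m2))" by simp
    moreover have "2 * real_of_int i * real m1 = real_of_int (2 * int m1 * i)" by simp
    ultimately show "(real k * (real m1 - real m2) = 2 * real_of_int i * real m1) \<longleftrightarrow>
     (int k * (int m1 - int m2) = 2 * int m1 * i)" by (metis of_int_eq_iff)
  qed
  thus ?thesis unfolding dvd_def by simp
qed

lemma Pk_node:
  assumes "m1 \<ge> 1" "m2 \<ge> 1" "t = tnode m1 m2 l"
  shows "Pk m1 m2 t k \<longleftrightarrow> (2 * int m1) dvd (int k * (int m1 - int m2)) \<or>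
            (2 * int m1) dvd (int l + int k * (int m1 + int m2))"
proof -
  have t: "2 * real m1 * real m2 * t = real l * pi" using assms unfolding tnode_def by simp
  have "\<And>i::int. (2 * real m1 * real m2 * t + real k * (real m1 + real m2) * pi = 2 * real_of_int i * real m1 * pi)
     \<longleftrightarrow> (int l + int k * (int m1 + int m2) = 2 * int m1 * i)"
  proof -
    fix i :: int
    have "(2 * real m1 * real m2 * t + real k * (real m1 + real m2) * pi = 2 * real_of_int i * real m1 * pi)
      \<longleftrightarrow> (real l + real k * (real m1 + real m2)) * pi = (2 * real_of_int i * real m1) * pi"
      unfolding t by (simp add: algebra_simps)
    also have "\<dots> \<longleftrightarrow> real l + real k * (real m1 + real m2) = 2 * real_of_int i * real m1" by simp
    also have "\<dots> \<longleftrightarrow> real_of_int (int l + int k * (int m1 + int m2)) = real_of_int (2 * int m1 * i)" by (simp add: mult_ac)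
    also have "\<dots> \<longleftrightarrow> (int l + int k * (int m1 + int m2) = 2 * int m1 * i)" by (rule of_int_eq_iff)
    finally show "(2 * real m1 * real m2 * t + real k * (real m1 + real m2) * pi = 2 * real_of_int i * real m1 * pi)
     \<longleftrightarrow> (int l + int k * (int m1 + int m2) = 2 * int m1 * i)" .
  qed
  thus ?thesis unfolding Pk_char[OF assms(1)] D1_iff dvd_def by simp
qed

lemma Pk_nonnode:
  assumes "m1 \<ge> 1" "m2 \<ge> 1" "0 \<le> t" "t < 2*pi" "\<not> (\<exists>l<4*m1*m2. t = tnode m1 m2 l)"
  shows "Pk m1 m2 t k \<longleftrightarrow> (2 * int m1) dvd (int k * (int m1 - int m2))"
proof -
  have "\<not> (2 * real m1 * real m2 * t + real k * (real m1 + real m2) * pi = 2 * real_of_int i * real m1 * pi)" for i :: int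
  proof
    assume h: "2 * real m1 * real m2 * t + real k * (real m1 + real m2) * pi = 2 * real_of_int i * real m1 * pi"
    define n where "n = 2 * i * int m1 - int k * (int m1 + int m2)"
    have mm: "2 * real m1 * real m2 > 0" using assms by simp
    have tn: "t = real_of_int n * pi / (2 * real m1 * real m2)"
    proof -
      have nz: "real m1 \<noteq> 0" "real m2 \<noteq> 0" using assms by auto
      have "t * (2 * real m1 * real m2) = real_of_int n * pi" using h unfolding n_def by (simp add: algebra_simps)
      thus ?thesis using nz by (simp add: eq_divide_eq)
    qed
    have n0: "n \<ge> 0"
    proof (rule ccontr)
      assume "\<not> n \<ge> 0" hence "real_of_int n < 0" by simp
      hence "real_of_int n * pi / (2 * real m1 * real m2) < 0" using mm by (simp add: divide_neg_pos mult_neg_pos)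
      thus False using tn assms(3) by simp
    qed
    have n1: "n < 4 * int m1 * int m2"
    proof (rule ccontr)
      assume "\<not> n < 4 * int m1 * int m2" hence "4 * int m1 * int m2 \<le> n" by simp
      hence "real_of_int (4 * int m1 * int m2) \<le> real_of_int n" by (simp only: of_int_le_iff)
      hence "real_of_int n \<ge> 4 * real m1 * real m2" by simp
      hence "real_of_int n * pi \<ge> (4 * real m1 * real m2) * pi" by simp
      hence "real_of_int n * pi / (2 * real m1 * real m2) \<ge> (4 * real m1 * real m2) * pi / (2 * real m1 * real m2)"
        using mm divide_right_mono by (metis less_eq_real_def)
      also have "(4 * real m1 * real m2) * pi / (2 * real m1 * real m2) = 2 * pi" using assms(1,2) by (simp add: field_simps)
      finally show False using tn assms(4) by simp
    qed
    have "nat n < 4*m1*m2" using n0 n1 by (simp add: nat_less_iff)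
    moreover have "t = tnode m1 m2 (nat n)" unfolding tnode_def tn using n0 by simp
    ultimately show False using assms(5) by blast
  qed
  thus ?thesis unfolding Pk_char[OF assms(1)] D1_iff by simp
qed



lemma lin_exists:
  fixes c n x :: int
  assumes "0 < n" "coprime c n"
  shows "\<exists>k0. 0 \<le> k0 \<and> k0 < n \<and> n dvd x + k0*c"
proof -
  obtain u v where uv: "u * c + v * n = 1" using bezout_int[of c n] assms(2)
    by (auto simp: coprime_iff_gcd_eq_1)
  define q where "q = (-x*u) div n"
  define k0 where "k0 = (-x*u) mod n"
  have k: "k0 = -x*u - n*q" unfolding k0_def q_def by (metis add_diff_cancel_left' div_mult_mod_eq mult.commute)
  have uc: "u * c = 1 - v * n" using uv by simp
  have "x + k0*c = x - x * (u * c) - n*q*c" unfolding k by (simp add: algebra_simps)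
  also have "\<dots> = n*(x * v - q * c)" unfolding uc by (simp add: algebra_simps)
  finally have "x + k0*c = n*(x * v - q * c)" .
  hence "n dvd x + k0*c" by simp
  moreover have "0 \<le> k0" "k0 < n" unfolding k0_def using assms(1) by auto
  ultimately show ?thesis by blast
qed

lemma lin_unique:
  fixes c n x k k' :: int
  assumes "coprime c n" "n dvd x + k*c" "n dvd x + k'*c"
  shows "n dvd k - k'"
proof -
  have "n dvd (x + k*c) - (x + k'*c)" using assms(2,3) by (rule dvd_diff)
  hence "n dvd (k - k') * c" by (simp add: algebra_simps)
  thus ?thesis using assms(1) by (simp add: coprime_commute coprime_dvd_mult_left_iff)
qed

lemma dvd_small_zero:
  fixes n x :: int
  assumes "n dvd x" "\<bar>x\<bar> < n" shows "x = 0"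
proof (rule ccontr)
  assume "x \<noteq> 0"
  hence "\<bar>n\<bar> \<le> \<bar>x\<bar>" using dvd_imp_le_int assms(1) by blast
  thus False using assms(2) by linarith
qed

lemma coprime_int_of_nat: "coprime (int m) (int n) \<longleftrightarrow> coprime m n"
  unfolding coprime_iff_gcd_eq_1 gcd_int_int_eq by simp

lemma coprime_self_diff:
  fixes a b :: int assumes "coprime a b" shows "coprime a (a - b)"
proof (rule coprimeI)
  fix c assume "c dvd a" "c dvd a - b"
  hence "c dvd a - (a - b)" by (rule dvd_diff)
  hence "c dvd b" by simp
  thus "is_unit c" using assms \<open>c dvd a\<close> coprime_common_divisor by blast
qed

lemma coprime_self_add:
  fixes a b :: int assumes "coprime a b" shows "coprime a (a + b)"
proof (rule coprimeI)
  fix c assume "c dvd a" "c dvd a + b"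
  hence "c dvd (a + b) - a" by (intro dvd_diff)
  hence "c dvd b" by simp
  thus "is_unit c" using assms \<open>c dvd a\<close> coprime_common_divisor by blast
qed

lemma both_odd:
  fixes m1 m2 :: nat
  assumes "coprime m1 m2" "even (m1 + m2)" shows "odd m1" "odd m2"
proof -
  have "\<not> (even m1 \<and> even m2)"
  proof
    assume "even m1 \<and> even m2"
    hence "(2::nat) dvd m1" "(2::nat) dvd m2" by auto
    hence "is_unit (2::nat)" using assms(1) coprime_common_divisor by blast
    thus False by simp
  qed
  thus "odd m1" "odd m2" using assms(2) by auto
qed

lemma K1_odd:
  assumes "m1 \<ge> 1" "coprime m1 m2" "odd (m1 + m2)"
  shows "{k. k < 2*m1 \<and> (2 * int m1) dvd (int k * (int m1 - int m2))} = {0}"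
proof -
  have cab: "coprime (int m1) (int m2)" using assms(2) coprime_int_of_nat by blast
  have "odd (int m1 - int m2)" using assms(3) by auto
  hence c2: "coprime 2 (int m1 - int m2)" by simp
  have c1: "coprime (int m1) (int m1 - int m2)" using coprime_self_diff[OF cab] .
  have c: "coprime (2 * int m1) (int m1 - int m2)" using c1 c2 by simp
  show ?thesis
  proof (intro set_eqI iffI)
    fix k assume "k \<in> {k. k < 2*m1 \<and> (2 * int m1) dvd (int k * (int m1 - int m2))}"
    hence k: "k < 2*m1" "(2 * int m1) dvd (int k * (int m1 - int m2))" by auto
    hence "(2 * int m1) dvd int k" using c coprime_dvd_mult_left_iff by blast
    moreover have "\<bar>int k\<bar> < 2 * int m1" using k(1) by simp
    ultimately have "int k = 0" by (rule dvd_small_zero)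
    thus "k \<in> {0}" by simp
  qed (use assms in auto)
qed

lemma K1_even:
  assumes "m1 \<ge> 1" "coprime m1 m2" "even (m1 + m2)"
  shows "{k. k < 2*m1 \<and> (2 * int m1) dvd (int k * (int m1 - int m2))} = {0, m1}"
proof -
  have cab: "coprime (int m1) (int m2)" using assms(2) coprime_int_of_nat by blast
  have e1: "even (int (m1 + m2))" using assms(3) by (simp only: even_of_nat)
  have e2: "int m1 - int m2 = int (m1 + m2) - 2 * int m2" by simp
  have "even (int m1 - int m2)" unfolding e2 using e1 by simp
  then obtain d where d: "int m1 - int m2 = 2 * d" by blast
  have cd: "coprime (int m1) d"
  proof (rule coprimeI)
    fix c assume "c dvd int m1" "c dvd d"
    hence "c dvd int m1 - 2 * d" by (intro dvd_diff) auto
    moreover have "int m1 - 2 * d = int m2" using d by linarith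
    ultimately have "c dvd int m2" by simp
    thus "is_unit c" using cab \<open>c dvd int m1\<close> coprime_common_divisor by blast
  qed
  have iff: "(2 * int m1) dvd (int k * (int m1 - int m2)) \<longleftrightarrow> int m1 dvd int k" for k
  proof -
    have "int k * (int m1 - int m2) = 2 * (int k * d)" using d by simp
    hence "(2 * int m1) dvd (int k * (int m1 - int m2)) \<longleftrightarrow> (2 * int m1) dvd (2 * (int k * d))"
      by (simp only:)
    also have "\<dots> \<longleftrightarrow> int m1 dvd int k * d" by (rule dvd_times_left_cancel_iff) simp
    also have "\<dots> \<longleftrightarrow> int m1 dvd int k" by (rule coprime_dvd_mult_left_iff[OF cd])
    finally show ?thesis .
  qed
  show ?thesis
  proof (intro set_eqI iffI)
    fix k assume "k \<in> {k. k < 2*m1 \<and> (2 * int m1) dvd (int k * (int m1 - int m2))}"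
    hence k: "k < 2*m1" "m1 dvd k" using iff by auto
    then obtain q where q: "k = m1 * q" by blast
    have "m1 * q < m1 * 2" using k(1) q by (simp add: mult.commute)
    hence "q < 2" by simp
    hence "q = 0 \<or> q = 1" by auto
    thus "k \<in> {0, m1}" using q by auto
  next
    fix k assume "k \<in> {0, m1}"
    hence "k < 2*m1" "int m1 dvd int k" using assms(1) by auto
    thus "k \<in> {k. k < 2*m1 \<and> (2 * int m1) dvd (int k * (int m1 - int m2))}"
      using iff by blast
  qed
qed

lemma K2_odd:
  assumes "m1 \<ge> 1" "coprime m1 m2" "odd (m1 + m2)"
  shows "\<exists>k0<2*m1. {k. k < 2*m1 \<and> (2 * int m1) dvd (int l + int k * (int m1 + int m2))} = {k0}"
proof -
  have cab: "coprime (int m1) (int m2)" using assms(2) coprime_int_of_nat by blast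
  have "odd (int m1 + int m2)" using assms(3) by (metis even_of_nat of_nat_add)
  hence c2: "coprime 2 (int m1 + int m2)" by simp
  have c1: "coprime (int m1) (int m1 + int m2)" using coprime_self_add[OF cab] .
  have c: "coprime (int m1 + int m2) (2 * int m1)" using c1 c2 by (simp add: coprime_commute)
  obtain k0 where k0: "0 \<le> k0" "k0 < 2 * int m1" "(2 * int m1) dvd int l + k0 * (int m1 + int m2)"
    using lin_exists[of "2 * int m1" "int m1 + int m2" "int l"] c assms(1) by auto
  have "nat k0 < 2*m1" using k0 by linarith
  moreover have "{k. k < 2*m1 \<and> (2 * int m1) dvd (int l + int k * (int m1 + int m2))} = {nat k0}"
  proof (intro set_eqI iffI)
    fix k assume "k \<in> {k. k < 2*m1 \<and> (2 * int m1) dvd (int l + int k * (int m1 + int m2))}"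
    hence k: "k < 2*m1" "(2 * int m1) dvd (int l + int k * (int m1 + int m2))" by auto
    have "(2 * int m1) dvd int k - k0" using lin_unique[OF c k(2) k0(3)] .
    moreover have "\<bar>int k - k0\<bar> < 2 * int m1" using k(1) k0 by linarith
    ultimately have "int k - k0 = 0" by (rule dvd_small_zero)
    thus "k \<in> {nat k0}" by auto
  next
    fix k assume "k \<in> {nat k0}"
    thus "k \<in> {k. k < 2*m1 \<and> (2 * int m1) dvd (int l + int k * (int m1 + int m2))}"
      using k0 by auto
  qed
  ultimately show ?thesis by blast
qed

lemma K2_even_odd:
  assumes "even (m1 + m2)" "odd l"
  shows "{k. k < 2*m1 \<and> (2 * int m1) dvd (int l + int k * (int m1 + int m2))} = {}"
proof -
  have "even (int m1 + int m2)" using assms(1) by (metis even_of_nat of_nat_add)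
  moreover have "odd (int l)" using assms(2) by simp
  ultimately have "odd (int l + int k * (int m1 + int m2))" for k by simp
  moreover have "(2 * int m1) dvd x \<Longrightarrow> even x" for x by (metis dvd_mult_left)
  ultimately show ?thesis by blast
qed

lemma K2_even_even:
  assumes "m1 \<ge> 1" "coprime m1 m2" "even (m1 + m2)" "l = 2 * j"
  shows "\<exists>k0<m1. (k0 = 0 \<longleftrightarrow> m1 dvd j) \<and>
    {k. k < 2*m1 \<and> (2 * int m1) dvd (int l + int k * (int m1 + int m2))} = {k0, k0 + m1}"
proof -
  have cab: "coprime (int m1) (int m2)" using assms(2) coprime_int_of_nat by blast
  have "even (int m1 + int m2)" using assms(3) by (metis even_of_nat of_nat_add)
  then obtain e where e: "int m1 + int m2 = 2 * e" by blast
  have ce: "coprime e (int m1)"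
  proof (rule coprimeI)
    fix c assume "c dvd e" "c dvd int m1"
    hence "c dvd 2 * e - int m1" by (intro dvd_diff) auto
    moreover have "2 * e - int m1 = int m2" using e by linarith
    ultimately have "c dvd int m2" by simp
    thus "is_unit c" using cab \<open>c dvd int m1\<close> coprime_common_divisor by blast
  qed
  have iff: "(2 * int m1) dvd (int l + int k * (int m1 + int m2)) \<longleftrightarrow> int m1 dvd int j + int k * e" for k
  proof -
    have "int l + int k * (int m1 + int m2) = 2 * (int j + int k * e)" using e assms(4) by simp
    hence "(2 * int m1) dvd (int l + int k * (int m1 + int m2)) \<longleftrightarrow> (2 * int m1) dvd 2 * (int j + int k * e)"
      by (simp only:)
    also have "\<dots> \<longleftrightarrow> int m1 dvd int j + int k * e" by (rule dvd_times_left_cancel_iff) simp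
    finally show ?thesis .
  qed
  obtain k0 where k0: "0 \<le> k0" "k0 < int m1" "int m1 dvd int j + k0 * e"
    using lin_exists[OF _ ce, of "int j"] assms(1) by (metis of_nat_0_less_iff less_le_trans zero_less_one)
  have lt: "nat k0 < m1" using k0 by linarith
  have z: "nat k0 = 0 \<longleftrightarrow> m1 dvd j"
  proof
    assume "nat k0 = 0" hence "k0 = 0" using k0 by linarith
    thus "m1 dvd j" using k0(3) by simp
  next
    assume "m1 dvd j" hence "int m1 dvd int j + 0 * e" by simp
    hence "int m1 dvd 0 - k0" using lin_unique[OF ce _ k0(3)] by blast
    moreover have "\<bar>0 - k0\<bar> < int m1" using k0 by linarith
    ultimately have "0 - k0 = 0" by (rule dvd_small_zero)
    thus "nat k0 = 0" by simp
  qed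
  have "{k. k < 2*m1 \<and> (2 * int m1) dvd (int l + int k * (int m1 + int m2))} = {nat k0, nat k0 + m1}"
  proof (intro set_eqI iffI)
    fix k assume "k \<in> {k. k < 2*m1 \<and> (2 * int m1) dvd (int l + int k * (int m1 + int m2))}"
    hence k: "k < 2*m1" "int m1 dvd int j + int k * e" using iff by auto
    have d: "int m1 dvd int k - k0" using lin_unique[OF ce k(2) k0(3)] .
    show "k \<in> {nat k0, nat k0 + m1}"
    proof (cases "int k < k0 + int m1")
      case True
      have "\<bar>int k - k0\<bar> < int m1" using True k0 by linarith
      hence "int k - k0 = 0" using d dvd_small_zero by blast
      thus ?thesis by auto
    next
      case False
      have d2: "int m1 dvd (int k - k0) - int m1" using dvd_diff[OF d dvd_refl] .
      have "\<bar>(int k - k0) - int m1\<bar> < int m1" using False k0 k(1) by linarith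
      hence "(int k - k0) - int m1 = 0" using d2 dvd_small_zero by blast
      thus ?thesis using k0 by auto
    qed
  next
    fix k assume "k \<in> {nat k0, nat k0 + m1}"
    hence "k = nat k0 \<or> k = nat k0 + m1" by simp
    have dd2: "int m1 dvd int j + (k0 + int m1) * e"
    proof -
      have eq: "int j + (k0 + int m1) * e = (int j + k0 * e) + int m1 * e" by (simp add: algebra_simps)
      have dd: "int m1 dvd (int j + k0 * e) + int m1 * e" by (rule dvd_add[OF k0(3)]) simp
      show ?thesis unfolding eq by (rule dd)
    qed
    have "k < 2*m1 \<and> int m1 dvd int j + int k * e"
    proof (cases "k = nat k0")
      case True
      hence "int k = k0" using k0(1) by simp
      thus ?thesis using True lt k0(3) by simp
    next
      case False
      hence kk: "k = nat k0 + m1" using \<open>k = nat k0 \<or> k = nat k0 + m1\<close> by blast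
      hence "int k = k0 + int m1" using k0(1) by simp
      thus ?thesis using kk lt dd2 by simp
    qed
    thus "k \<in> {k. k < 2*m1 \<and> (2 * int m1) dvd (int l + int k * (int m1 + int m2))}"
      using iff by blast
  qed
  with lt z show ?thesis by (intro exI[of _ "nat k0"]) simp
qed



lemma rho_zero_iff: "rhodonea m1 m2 \<alpha> s = (0, 0) \<longleftrightarrow> cos (real m2 * s) = 0"
proof
  assume h: "rhodonea m1 m2 \<alpha> s = (0, 0)"
  define \<theta> where "\<theta> = real m1 * s - \<alpha> * pi"
  have "cos (real m2 * s) * cos \<theta> = 0" "cos (real m2 * s) * sin \<theta> = 0"
    using h unfolding rhodonea_def \<theta>_def by auto
  moreover have "\<not> (cos \<theta> = 0 \<and> sin \<theta> = 0)"
  proof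
    assume "cos \<theta> = 0 \<and> sin \<theta> = 0"
    thus False using sin_cos_squared_add[of \<theta>] by simp
  qed
  ultimately show "cos (real m2 * s) = 0" by auto
qed (simp add: rhodonea_def)

lemma zero_set:
  assumes "m2 \<ge> 1"
  shows "{s. 0 \<le> s \<and> s < 2*pi \<and> cos (real m2 * s) = 0} = (\<lambda>j. (2 * real j + 1) * pi / (2 * real m2)) ` {..<2*m2}"
proof (intro set_eqI iffI)
  have m: "real m2 > 0" using assms by simp
  fix s assume "s \<in> {s. 0 \<le> s \<and> s < 2*pi \<and> cos (real m2 * s) = 0}"
  hence s: "0 \<le> s" "s < 2*pi" "cos (real m2 * s) = 0" by auto
  obtain i where i: "odd i" "real m2 * s = real_of_int i * (pi/2)" using s(3) cos_zero_iff_int by blast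
  have si: "s = real_of_int i * pi / (2 * real m2)" using i(2) m by (simp add: field_simps)
  have "real_of_int i * pi = s * (2 * real m2)" using i(2) by (simp add: algebra_simps)
  hence "real_of_int i * pi \<ge> 0" using s(1) m by simp
  hence i0: "i \<ge> 0" using pi_gt_zero by (simp add: zero_le_mult_iff)
  have "real m2 * s < real m2 * (2*pi)" using s(2) m by simp
  hence "real_of_int i * (pi/2) < real m2 * (2*pi)" unfolding i(2) .
  moreover have "real_of_int i * pi = 2 * (real_of_int i * (pi/2))" by simp
  moreover have "(4 * real m2) * pi = 2 * (real m2 * (2*pi))" by simp
  ultimately have "real_of_int i * pi < (4 * real m2) * pi" by linarith
  hence "real_of_int i < 4 * real m2" using pi_gt_zero mult_less_cancel_right_pos by blast
  hence i1: "i < 4 * int m2" by linarith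
  obtain j where j: "i = 2 * j + 1" using i(1) by (metis oddE)
  have j0: "j \<ge> 0" using i0 j by linarith
  have "nat j < 2*m2" using i1 j j0 by linarith
  moreover have "s = (2 * real (nat j) + 1) * pi / (2 * real m2)" using si j j0 by simp
  ultimately show "s \<in> (\<lambda>j. (2 * real j + 1) * pi / (2 * real m2)) ` {..<2*m2}" by auto
next
  have m: "real m2 > 0" using assms by simp
  fix s assume "s \<in> (\<lambda>j. (2 * real j + 1) * pi / (2 * real m2)) ` {..<2*m2}"
  then obtain j where j: "j < 2*m2" "s = (2 * real j + 1) * pi / (2 * real m2)" by auto
  have "0 \<le> s" using j m by simp
  moreover have "s < 2*pi"
  proof -
    have "2 * real j + 1 < 4 * real m2" using j(1) by linarith
    hence "(2 * real j + 1) * pi < (4 * real m2) * pi" by simp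
    hence "(2 * real j + 1) * pi / (2 * real m2) < (4 * real m2) * pi / (2 * real m2)"
      using m by (intro divide_strict_right_mono) simp_all
    also have "(4 * real m2) * pi / (2 * real m2) = 2 * pi" using m by (simp add: field_simps)
    finally show ?thesis using j(2) by simp
  qed
  moreover have "cos (real m2 * s) = 0"
  proof -
    have "real m2 * s = real_of_int (2 * int j + 1) * (pi/2)" using j(2) m by (simp add: field_simps)
    moreover have "odd (2 * int j + 1)" by simp
    ultimately show ?thesis unfolding cos_zero_iff_int by blast
  qed
  ultimately show "s \<in> {s. 0 \<le> s \<and> s < 2*pi \<and> cos (real m2 * s) = 0}" by simp
qed

lemma zero_set_card:
  assumes "m2 \<ge> 1"
  shows "card {s. 0 \<le> s \<and> s < 2*pi \<and> cos (real m2 * s) = 0} = 2 * m2"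
proof -
  have m: "real m2 > 0" using assms by simp
  have "inj_on (\<lambda>j. (2 * real j + 1) * pi / (2 * real m2)) {..<2*m2}"
    by (rule inj_onI) (use m in simp)
  thus ?thesis unfolding zero_set[OF assms] by (simp add: card_image)
qed

lemma card_zero_case:
  assumes "m2 \<ge> 1" "cos (real m2 * t) = 0"
  shows "card (self_inter_set (rhodonea m1 m2 \<alpha>) t) = 2 * m2"
proof -
  have h: "rhodonea m1 m2 \<alpha> t = (0, 0)" using assms(2) rho_zero_iff by blast
  have "self_inter_set (rhodonea m1 m2 \<alpha>) t = {s. 0 \<le> s \<and> s < 2*pi \<and> cos (real m2 * s) = 0}"
    unfolding self_inter_set_def h rho_zero_iff by auto
  thus ?thesis using zero_set_card[OF assms(1)] by simp
qed


lemma tnode_inj: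
  assumes "m1 \<ge> 1" "m2 \<ge> 1" "tnode m1 m2 l = tnode m1 m2 l'" shows "l = l'"
  using assms unfolding tnode_def by (simp add: field_simps)

lemma tnode_range:
  assumes "m1 \<ge> 1" "m2 \<ge> 1" "l < 4*m1*m2"
  shows "0 \<le> tnode m1 m2 l" "tnode m1 m2 l < 2*pi"
proof -
  have mm: "2 * real m1 * real m2 > 0" using assms by simp
  show "0 \<le> tnode m1 m2 l" unfolding tnode_def using mm by simp
  have "real l < 4 * real m1 * real m2" using assms(3) by (metis of_nat_less_iff of_nat_mult of_nat_numeral)
  hence "real l * pi < (4 * real m1 * real m2) * pi" by simp
  hence "real l * pi / (2 * real m1 * real m2) < (4 * real m1 * real m2) * pi / (2 * real m1 * real m2)"
    using mm by (intro divide_strict_right_mono) simp_all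
  also have "(4 * real m1 * real m2) * pi / (2 * real m1 * real m2) = 2 * pi" using assms(1,2) by (simp add: field_simps)
  finally show "tnode m1 m2 l < 2*pi" unfolding tnode_def .
qed

lemma cos_zero_node:
  assumes "m1 \<ge> 1" "m2 \<ge> 1" "0 \<le> t" "t < 2*pi"
  shows "cos (real m2 * t) = 0 \<longleftrightarrow> (\<exists>l<4*m1*m2. t = tnode m1 m2 l \<and> l mod (2*m1) = m1)"
proof
  assume "cos (real m2 * t) = 0"
  hence "t \<in> (\<lambda>j. (2 * real j + 1) * pi / (2 * real m2)) ` {..<2*m2}"
    using zero_set[OF assms(2)] assms(3,4) by blast
  then obtain j where j: "j < 2*m2" "t = (2 * real j + 1) * pi / (2 * real m2)" by auto
  define l where "l = (2*j+1)*m1"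
  have "l < 4*m1*m2"
  proof -
    have "2*j+1 < 4*m2" using j(1) by simp
    hence "(2*j+1)*m1 < (4*m2)*m1" using assms(1) mult_less_mono1 by (metis less_le_trans zero_less_one)
    thus ?thesis unfolding l_def by (simp add: ac_simps)
  qed
  moreover have "t = tnode m1 m2 l"
  proof -
    have nz: "real m1 \<noteq> 0" "real m2 \<noteq> 0" using assms(1,2) by auto
    show ?thesis unfolding tnode_def l_def j(2) using nz by (simp add: field_simps)
  qed
  moreover have "l mod (2*m1) = m1"
  proof -
    have "l = m1 + (2*m1) * j" unfolding l_def by (simp add: algebra_simps)
    hence "l mod (2*m1) = m1 mod (2*m1)" by simp
    thus ?thesis using assms(1) by simp
  qed
  ultimately show "\<exists>l<4*m1*m2. t = tnode m1 m2 l \<and> l mod (2*m1) = m1" by blast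
next
  assume "\<exists>l<4*m1*m2. t = tnode m1 m2 l \<and> l mod (2*m1) = m1"
  then obtain l where l: "t = tnode m1 m2 l" "l mod (2*m1) = m1" by blast
  define q where "q = l div (2*m1)"
  have "l = (2*m1) * q + m1" unfolding q_def using l(2) by (metis div_mult_mod_eq mult.commute)
  hence lq: "real l = (2 * real q + 1) * real m1" by (simp add: algebra_simps)
  have "real m2 * t = real_of_int (2 * int q + 1) * (pi/2)"
    unfolding l(1) tnode_def lq using assms(1,2) by (simp add: field_simps)
  moreover have "odd (2 * int q + 1)" by simp
  ultimately show "cos (real m2 * t) = 0" unfolding cos_zero_iff_int by blast
qed

lemma card_nonzero:
  assumes "m1 \<ge> 1" "0 \<le> t" "t < 2*pi" "cos (real m2 * t) \<noteq> 0"
  shows "card (self_inter_set (rhodonea m1 m2 \<alpha>) t) = card {k. k < 2*m1 \<and> Pk m1 m2 t k}"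
proof -
  have "inj_on (sk m1 t) {k. k < 2*m1 \<and> Pk m1 m2 t k}"
    using sk_inj[OF assms(1)] by (rule inj_on_subset) auto
  thus ?thesis unfolding self_inter_nonzero[OF assms] by (rule card_image)
qed

lemma node_nonzero:
  assumes "m1 \<ge> 1" "m2 \<ge> 1" "l < 4*m1*m2" "l mod (2*m1) \<noteq> m1"
  shows "cos (real m2 * tnode m1 m2 l) \<noteq> 0"
proof
  assume "cos (real m2 * tnode m1 m2 l) = 0"
  then obtain l' where "tnode m1 m2 l = tnode m1 m2 l'" "l' mod (2*m1) = m1"
    using cos_zero_node[OF assms(1,2) tnode_range[OF assms(1-3)]] by blast
  thus False using tnode_inj[OF assms(1,2)] assms(4) by metis
qed

lemma card_odd_node:
  assumes "m1 \<ge> 1" "m2 \<ge> 1" "coprime m1 m2" "odd (m1 + m2)" "l < 4*m1*m2" "l mod (2*m1) \<noteq> m1"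
  shows "card (self_inter_set (rhodonea m1 m2 \<alpha>) (tnode m1 m2 l)) = (if (2*m1) dvd l then 1 else 2)"
proof -
  let ?t = "tnode m1 m2 l"
  have K: "{k. k < 2*m1 \<and> Pk m1 m2 ?t k} =
     {k. k < 2*m1 \<and> (2 * int m1) dvd (int k * (int m1 - int m2))} \<union>
     {k. k < 2*m1 \<and> (2 * int m1) dvd (int l + int k * (int m1 + int m2))}"
    using Pk_node[OF assms(1,2) refl, of l] by auto
  obtain k0 where k0: "k0 < 2*m1" "{k. k < 2*m1 \<and> (2 * int m1) dvd (int l + int k * (int m1 + int m2))} = {k0}"
    using K2_odd[OF assms(1,3,4), of l] by blast
  have z: "k0 = 0 \<longleftrightarrow> (2*m1) dvd l"
  proof -
    have "k0 = 0 \<longleftrightarrow> 0 \<in> {k0}" by auto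
    also have "\<dots> \<longleftrightarrow> (2 * int m1) dvd int l" unfolding k0(2)[symmetric] using assms(1) by simp
    also have "\<dots> \<longleftrightarrow> (2*m1) dvd l" by (metis int_dvd_int_iff of_nat_mult of_nat_numeral)
    finally show ?thesis .
  qed
  have "card (self_inter_set (rhodonea m1 m2 \<alpha>) ?t) = card ({0} \<union> {k0})"
    unfolding card_nonzero[OF assms(1) tnode_range[OF assms(1,2,5)] node_nonzero[OF assms(1,2,5,6)]]
      K K1_odd[OF assms(1,3,4)] k0(2) ..
  thus ?thesis using z by auto
qed

lemma card_odd_nonnode:
  assumes "m1 \<ge> 1" "m2 \<ge> 1" "coprime m1 m2" "odd (m1 + m2)" "0 \<le> t" "t < 2*pi"
    "\<not> (\<exists>l<4*m1*m2. t = tnode m1 m2 l)"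
  shows "card (self_inter_set (rhodonea m1 m2 \<alpha>) t) = 1"
proof -
  have nz: "cos (real m2 * t) \<noteq> 0" using cos_zero_node[OF assms(1,2,5,6)] assms(7) by blast
  have "{k. k < 2*m1 \<and> Pk m1 m2 t k} = {k. k < 2*m1 \<and> (2 * int m1) dvd (int k * (int m1 - int m2))}"
    using Pk_nonnode[OF assms(1,2,5,6,7)] by auto
  thus ?thesis unfolding card_nonzero[OF assms(1,5,6) nz] K1_odd[OF assms(1,3,4)] by simp
qed

lemma card_even_node:
  assumes "m1 \<ge> 1" "m2 \<ge> 1" "coprime m1 m2" "even (m1 + m2)" "l < 4*m1*m2" "l mod (2*m1) \<noteq> m1"
  shows "card (self_inter_set (rhodonea m1 m2 \<alpha>) (tnode m1 m2 l)) =
     (if even l \<and> \<not> m1 dvd (l div 2) then 4 else 2)"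
proof -
  let ?t = "tnode m1 m2 l"
  have K: "{k. k < 2*m1 \<and> Pk m1 m2 ?t k} =
     {k. k < 2*m1 \<and> (2 * int m1) dvd (int k * (int m1 - int m2))} \<union>
     {k. k < 2*m1 \<and> (2 * int m1) dvd (int l + int k * (int m1 + int m2))}"
    using Pk_node[OF assms(1,2) refl, of l] by auto
  have C: "card (self_inter_set (rhodonea m1 m2 \<alpha>) ?t) = card ({0, m1} \<union>
     {k. k < 2*m1 \<and> (2 * int m1) dvd (int l + int k * (int m1 + int m2))})"
    unfolding card_nonzero[OF assms(1) tnode_range[OF assms(1,2,5)] node_nonzero[OF assms(1,2,5,6)]]
      K K1_even[OF assms(1,3,4)] ..
  show ?thesis
  proof (cases "even l")
    case False
    thus ?thesis using C K2_even_odd[OF assms(4) False] assms(1) by simp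
  next
    case True
    then obtain j where j: "l = 2 * j" by blast
    obtain k0 where k0: "k0 < m1" "k0 = 0 \<longleftrightarrow> m1 dvd j"
      "{k. k < 2*m1 \<and> (2 * int m1) dvd (int l + int k * (int m1 + int m2))} = {k0, k0 + m1}"
      using K2_even_even[OF assms(1,3,4) j] by blast
    have lj: "l div 2 = j" using j by simp
    show ?thesis
    proof (cases "k0 = 0")
      case True
      have e: "{0, m1} \<union> {k0, k0 + m1} = {0, m1}" using True by auto
      have "card ({0, m1} \<union> {k0, k0 + m1}) = 2" unfolding e using assms(1) by simp
      thus ?thesis using C k0 lj True by simp
    next
      case False
      hence "card ({0, m1} \<union> {k0, k0 + m1}) = 4" using k0(1) by auto
      thus ?thesis using C k0 lj False \<open>even l\<close> by simp
    qed
  qed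
qed

lemma card_even_nonnode:
  assumes "m1 \<ge> 1" "m2 \<ge> 1" "coprime m1 m2" "even (m1 + m2)" "0 \<le> t" "t < 2*pi"
    "\<not> (\<exists>l<4*m1*m2. t = tnode m1 m2 l)"
  shows "card (self_inter_set (rhodonea m1 m2 \<alpha>) t) = 2"
proof -
  have nz: "cos (real m2 * t) \<noteq> 0" using cos_zero_node[OF assms(1,2,5,6)] assms(7) by blast
  have "{k. k < 2*m1 \<and> Pk m1 m2 t k} = {k. k < 2*m1 \<and> (2 * int m1) dvd (int k * (int m1 - int m2))}"
    using Pk_nonnode[OF assms(1,2,5,6,7)] by auto
  thus ?thesis unfolding card_nonzero[OF assms(1,5,6) nz] K1_even[OF assms(1,3,4)] using assms(1) by simp
qed


lemma rho_plus_pi: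
  assumes "even (m1 + m2)"
  shows "rhodonea m1 m2 \<alpha> (t + pi) = rhodonea m1 m2 \<alpha> t"
proof -
  have 1: "real m2 * (t + pi) = real m2 * t + real m2 * pi" by (simp add: algebra_simps)
  have 2: "real m1 * (t + pi) - \<alpha> * pi = (real m1 * t - \<alpha> * pi) + real m1 * pi" by (simp add: algebra_simps)
  have "((-1::real)^m2) * (-1)^m1 = 1" using assms by (simp flip: power_add add.commute)
  hence "((-1::real)^m2) * (-1)^m1 * x = x" for x by simp
  thus ?thesis unfolding rhodonea_def 1 2 cos_shift_npi sin_shift_npi by (simp add: algebra_simps)
qed

lemma mod_m1_cases:
  fixes l m1 :: nat
  assumes "l mod m1 = 0" shows "l mod (2*m1) = 0 \<or> l mod (2*m1) = m1"
proof -
  obtain c where c: "l = m1 * c" using assms by blast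
  have "l mod (2*m1) = m1 * (c mod 2)" unfolding c by (metis mod_mult_mult1 mult.commute)
  moreover have "c mod 2 = 0 \<or> c mod 2 = 1" by auto
  ultimately show ?thesis by auto
qed

lemma mod_2m1_m1:
  fixes l m1 :: nat
  assumes "l mod (2*m1) = m1" shows "l mod m1 = 0"
proof -
  have "l mod m1 = l mod (2*m1) mod m1" by (simp add: mod_mod_cancel)
  thus ?thesis using assms by simp
qed

theorem proposition2p1:
  fixes m1 m2 :: nat and \<alpha> :: real
  assumes "m1 \<ge> 1" and "m2 \<ge> 1" and "coprime m1 m2"
  defines "\<rho> \<equiv> rhodonea m1 m2 \<alpha>"
  shows
   "(odd (m1 + m2) \<longrightarrow>
      minimal_period \<rho> (2*pi) \<and>
      (\<forall>t\<in>{0..<2*pi}.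
        ((\<exists>l<4*m1*m2. t = tnode m1 m2 l \<and> l mod (2*m1) = m1)
            \<longrightarrow> card (self_inter_set \<rho> t) = 2*m2) \<and>
        ((\<exists>l<4*m1*m2. t = tnode m1 m2 l \<and> l mod m1 \<noteq> 0)
            \<longrightarrow> card (self_inter_set \<rho> t) = 2) \<and>
        (\<not> (\<exists>l<4*m1*m2. t = tnode m1 m2 l \<and> l mod (2*m1) = m1) \<and>
         \<not> (\<exists>l<4*m1*m2. t = tnode m1 m2 l \<and> l mod m1 \<noteq> 0)
            \<longrightarrow> card (self_inter_set \<rho> t) = 1))) \<and>
    (even (m1 + m2) \<longrightarrow>
      minimal_period \<rho> pi \<and>
      (\<forall>t\<in>{0..<2*pi}.
        ((\<exists>l<4*m1*m2. t = tnode m1 m2 l \<and> l mod (2*m1) = m1)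
            \<longrightarrow> card (self_inter_set \<rho> t) = 2*m2) \<and>
        ((\<exists>l<2*m1*m2. t = tnode m1 m2 (2*l) \<and> l mod m1 \<noteq> 0)
            \<longrightarrow> card (self_inter_set \<rho> t) = 4) \<and>
        (\<not> (\<exists>l<4*m1*m2. t = tnode m1 m2 l \<and> l mod (2*m1) = m1) \<and>
         \<not> (\<exists>l<2*m1*m2. t = tnode m1 m2 (2*l) \<and> l mod m1 \<noteq> 0)
            \<longrightarrow> card (self_inter_set \<rho> t) = 2)))"
proof -
  have m1: "m1 \<ge> 1" and m2: "m2 \<ge> 1" and cp: "coprime m1 m2" using assms by auto
  have t0: "tnode m1 m2 0 = 0" unfolding tnode_def by simp
  have pos: "0 < 4*m1*m2" using m1 m2 by simp
  have odd_part: "odd (m1 + m2) \<longrightarrow>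
      minimal_period \<rho> (2*pi) \<and>
      (\<forall>t\<in>{0..<2*pi}.
        ((\<exists>l<4*m1*m2. t = tnode m1 m2 l \<and> l mod (2*m1) = m1)
            \<longrightarrow> card (self_inter_set \<rho> t) = 2*m2) \<and>
        ((\<exists>l<4*m1*m2. t = tnode m1 m2 l \<and> l mod m1 \<noteq> 0)
            \<longrightarrow> card (self_inter_set \<rho> t) = 2) \<and>
        (\<not> (\<exists>l<4*m1*m2. t = tnode m1 m2 l \<and> l mod (2*m1) = m1) \<and>
         \<not> (\<exists>l<4*m1*m2. t = tnode m1 m2 l \<and> l mod m1 \<noteq> 0)
            \<longrightarrow> card (self_inter_set \<rho> t) = 1))" (is "?P \<longrightarrow> ?M \<and> ?R")
  proof
    assume od: "odd (m1 + m2)"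
    have S0: "card (self_inter_set \<rho> 0) = 1"
      using card_odd_node[OF m1 m2 cp od pos, of \<alpha>] m1 t0 unfolding \<rho>_def by simp
    have mp: "minimal_period \<rho> (2*pi)"
      unfolding minimal_period_def
    proof (intro conjI allI impI)
      show "0 < 2*pi" by simp
      fix t show "\<rho> (t + 2*pi) = \<rho> t" unfolding \<rho>_def by (rule rho_plus_2pi)
    next
      fix q assume q: "0 < q \<and> q < 2*pi"
      show "\<not> (\<forall>t. \<rho> (t + q) = \<rho> t)"
      proof
        assume per: "\<forall>t. \<rho> (t + q) = \<rho> t"
        have "q \<in> self_inter_set \<rho> 0" "0 \<in> self_inter_set \<rho> 0"
          using q per[rule_format, of 0] unfolding self_inter_set_def by auto
        moreover obtain x where "self_inter_set \<rho> 0 = {x}" using S0 card_1_singletonE by blast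
        ultimately show False using q by auto
      qed
    qed
    have ?R
    proof (intro ballI conjI impI)
      fix t assume "t \<in> {0..<2*pi}"
      hence t: "0 \<le> t" "t < 2*pi" by auto
      {
        assume "\<exists>l<4*m1*m2. t = tnode m1 m2 l \<and> l mod (2*m1) = m1"
        hence "cos (real m2 * t) = 0" using cos_zero_node[OF m1 m2 t] by blast
        thus "card (self_inter_set \<rho> t) = 2*m2" unfolding \<rho>_def by (rule card_zero_case[OF m2])
      }
      {
        assume "\<exists>l<4*m1*m2. t = tnode m1 m2 l \<and> l mod m1 \<noteq> 0"
        then obtain l where l: "l < 4*m1*m2" "t = tnode m1 m2 l" "l mod m1 \<noteq> 0" by blast
        have a: "l mod (2*m1) \<noteq> m1"
        proof
          assume "l mod (2*m1) = m1"
          hence "l mod m1 = 0" by (rule mod_2m1_m1)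
          with l(3) show False by simp
        qed
        have b: "\<not> (2*m1) dvd l"
        proof
          assume "(2*m1) dvd l"
          hence "m1 dvd l" by (rule dvd_mult_right)
          thus False using l(3) by (simp add: dvd_eq_mod_eq_0)
        qed
        have "card (self_inter_set (rhodonea m1 m2 \<alpha>) (tnode m1 m2 l)) = 2"
          using card_odd_node[OF m1 m2 cp od l(1) a, of \<alpha>] b by simp
        thus "card (self_inter_set \<rho> t) = 2" unfolding \<rho>_def l(2) .
      }
      {
        assume n1: "\<not> (\<exists>l<4*m1*m2. t = tnode m1 m2 l \<and> l mod (2*m1) = m1) \<and>
                    \<not> (\<exists>l<4*m1*m2. t = tnode m1 m2 l \<and> l mod m1 \<noteq> 0)"
        show "card (self_inter_set \<rho> t) = 1"
        proof (cases "\<exists>l<4*m1*m2. t = tnode m1 m2 l")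
          case True
          then obtain l where l: "l < 4*m1*m2" "t = tnode m1 m2 l" by blast
          have a: "l mod (2*m1) \<noteq> m1"
          proof
            assume "l mod (2*m1) = m1"
            hence "\<exists>l<4*m1*m2. t = tnode m1 m2 l \<and> l mod (2*m1) = m1" using l by blast
            thus False using n1 by simp
          qed
          have "l mod m1 = 0"
          proof (rule ccontr)
            assume "l mod m1 \<noteq> 0"
            hence "\<exists>l<4*m1*m2. t = tnode m1 m2 l \<and> l mod m1 \<noteq> 0" using l by blast
            thus False using n1 by simp
          qed
          hence "l mod (2*m1) = 0 \<or> l mod (2*m1) = m1" by (rule mod_m1_cases)
          hence "l mod (2*m1) = 0" using a by simp
          hence "(2*m1) dvd l" by (simp add: dvd_eq_mod_eq_0)
          thus ?thesis using card_odd_node[OF m1 m2 cp od l(1) a, of \<alpha>] unfolding \<rho>_def l(2) by simp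
        next
          case False
          thus ?thesis using card_odd_nonnode[OF m1 m2 cp od t False] unfolding \<rho>_def by simp
        qed
      }
    qed
    with mp show "?M \<and> ?R" by (rule conjI)
  qed
  have even_part: "even (m1 + m2) \<longrightarrow>
      minimal_period \<rho> pi \<and>
      (\<forall>t\<in>{0..<2*pi}.
        ((\<exists>l<4*m1*m2. t = tnode m1 m2 l \<and> l mod (2*m1) = m1)
            \<longrightarrow> card (self_inter_set \<rho> t) = 2*m2) \<and>
        ((\<exists>l<2*m1*m2. t = tnode m1 m2 (2*l) \<and> l mod m1 \<noteq> 0)
            \<longrightarrow> card (self_inter_set \<rho> t) = 4) \<and>
        (\<not> (\<exists>l<4*m1*m2. t = tnode m1 m2 l \<and> l mod (2*m1) = m1) \<and>
         \<not> (\<exists>l<2*m1*m2. t = tnode m1 m2 (2*l) \<and> l mod m1 \<noteq> 0)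
            \<longrightarrow> card (self_inter_set \<rho> t) = 2))" (is "?P \<longrightarrow> ?M \<and> ?R")
  proof
    assume ev: "even (m1 + m2)"
    have m1odd: "odd m1" using both_odd[OF cp ev] by simp
    have S0: "card (self_inter_set \<rho> 0) = 2"
      using card_even_node[OF m1 m2 cp ev pos, of \<alpha>] m1 t0 unfolding \<rho>_def by simp
    have mp: "minimal_period \<rho> pi"
      unfolding minimal_period_def
    proof (intro conjI allI impI)
      show "0 < pi" by simp
      fix t show "\<rho> (t + pi) = \<rho> t" unfolding \<rho>_def by (rule rho_plus_pi[OF ev])
    next
      fix q assume q: "0 < q \<and> q < pi"
      show "\<not> (\<forall>t. \<rho> (t + q) = \<rho> t)"
      proof
        assume per: "\<forall>t. \<rho> (t + q) = \<rho> t"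
        have pp: "\<rho> pi = \<rho> 0" using rho_plus_pi[OF ev, of \<alpha> 0] unfolding \<rho>_def by simp
        have "{0, pi, q} \<subseteq> self_inter_set \<rho> 0"
          using q per[rule_format, of 0] pp pi_gt_zero unfolding self_inter_set_def by auto
        moreover have "finite (self_inter_set \<rho> 0)"
        proof (rule ccontr)
          assume "\<not> finite (self_inter_set \<rho> 0)"
          hence "card (self_inter_set \<rho> 0) = 0" by simp
          thus False using S0 by simp
        qed
        ultimately have "card {0, pi, q} \<le> card (self_inter_set \<rho> 0)" by (intro card_mono)
        hence "card {0, pi, q} \<le> 2" using S0 by simp
        moreover have "card {0, pi, q} = 3" using q pi_gt_zero by auto
        ultimately show False by simp
      qed
    qed
    have ?R
    proof (intro ballI conjI impI)
      fix t assume "t \<in> {0..<2*pi}"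
      hence t: "0 \<le> t" "t < 2*pi" by auto
      {
        assume "\<exists>l<4*m1*m2. t = tnode m1 m2 l \<and> l mod (2*m1) = m1"
        hence "cos (real m2 * t) = 0" using cos_zero_node[OF m1 m2 t] by blast
        thus "card (self_inter_set \<rho> t) = 2*m2" unfolding \<rho>_def by (rule card_zero_case[OF m2])
      }
      {
        assume "\<exists>l<2*m1*m2. t = tnode m1 m2 (2*l) \<and> l mod m1 \<noteq> 0"
        then obtain l where l: "l < 2*m1*m2" "t = tnode m1 m2 (2*l)" "l mod m1 \<noteq> 0" by blast
        have L: "2*l < 4*m1*m2" using l(1) by simp
        have mm: "(2*l) mod (2*m1) = 2 * (l mod m1)" by (rule mod_mult_mult1)
        have a: "(2*l) mod (2*m1) \<noteq> m1"
        proof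
          assume "(2*l) mod (2*m1) = m1"
          hence "m1 = 2 * (l mod m1)" using mm by simp
          hence "even m1" by (metis dvd_triv_left)
          thus False using m1odd by contradiction
        qed
        have b: "\<not> m1 dvd l" using l(3) by (simp add: dvd_eq_mod_eq_0)
        show "card (self_inter_set \<rho> t) = 4"
          using card_even_node[OF m1 m2 cp ev L a, of \<alpha>] b unfolding \<rho>_def l(2) by simp
      }
      {
        assume n1: "\<not> (\<exists>l<4*m1*m2. t = tnode m1 m2 l \<and> l mod (2*m1) = m1) \<and>
                    \<not> (\<exists>l<2*m1*m2. t = tnode m1 m2 (2*l) \<and> l mod m1 \<noteq> 0)"
        show "card (self_inter_set \<rho> t) = 2"
        proof (cases "\<exists>l<4*m1*m2. t = tnode m1 m2 l")
          case True
          then obtain L where L: "L < 4*m1*m2" "t = tnode m1 m2 L" by blast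
          have a: "L mod (2*m1) \<noteq> m1"
          proof
            assume "L mod (2*m1) = m1"
            hence "\<exists>l<4*m1*m2. t = tnode m1 m2 l \<and> l mod (2*m1) = m1" using L by blast
            thus False using n1 by simp
          qed
          have c: "\<not> (even L \<and> \<not> m1 dvd (L div 2))"
          proof
            assume h: "even L \<and> \<not> m1 dvd (L div 2)"
            define l where "l = L div 2"
            have "L = 2*l" unfolding l_def using h by simp
            moreover have "l < 2*m1*m2" using L(1) unfolding l_def by simp
            moreover have "l mod m1 \<noteq> 0" using h unfolding l_def by (simp add: dvd_eq_mod_eq_0)
            ultimately have "\<exists>l<2*m1*m2. t = tnode m1 m2 (2*l) \<and> l mod m1 \<noteq> 0" using L(2) by blast
            thus False using n1 by simp
          qed
          show ?thesis using card_even_node[OF m1 m2 cp ev L(1) a, of \<alpha>] c unfolding \<rho>_def L(2) by simp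
        next
          case False
          thus ?thesis using card_even_nonnode[OF m1 m2 cp ev t False] unfolding \<rho>_def by simp
        qed
      }
    qed
    with mp show "?M \<and> ?R" by (rule conjI)
  qed
  from odd_part even_part show ?thesis by (rule conjI)
qed

end
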